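(* Assume (H1)–(H5), let $z\in(0,z_s)$ and $\eta\in(0,\tfrac12\log\frac{z_s}{z})$. There exists a constant $K>0$, depending only on $(a_i)$, $(b_i)$, $z$ and $\eta$, such that for every compactly supported sequence $h=(h_i)_{i\ge1}$, $$\|L(h)\|_{\mathcal Z}\le K\|h\|_{\mathcal Z_{\mathcal D}}.$$
   Context: Let $(a_i)_{i\ge1}$, $(b_i)_{i\ge1}$ be nonnegative sequences. $Q_1=1$, $Q_i=\prod_{j=2}^i\frac{a_{j-1}}{b_j}$ for $i\ge2$; $z_s$ is the radius of convergence of $\sum_ia_iQ_iz^i$. For fixed $z\in(0,z_s)$ put $\Theta_i=Q_iz^i$. Define $\sigma_1=3a_1z+\sum_{i\ge1}a_i\Theta_i$ and $\sigma_i=a_iz+b_i$ for $i\ge2$. $\mathcal Z$ is the space of sequences with $\|h\|_{\mathcal Z}=\sum_ie^{\eta i}\Theta_i|h_i|<\infty$ and $\mathcal Z_{\mathcal D}$ those with $\|h\|_{\mathcal Z_{\mathcal D}}=\sum_i(1+\sigma_i)e^{\eta i}\Theta_i|h_i|<\infty$. Linear operators $S,P$ are defined on compactly supported sequences $h$ by: for all compactly supported $\varphi$, $\sum_iS_i(h)\Theta_i\varphi_i=\sum_{i\ge1}[\varphi_{i+1}-\varphi_i-\varphi_1]a_i\Theta_1\Theta_i(h_i+h_1-h_{i+1})$ and $\sum_iP_i(h)\Theta_i\varphi_i=-\varphi_1\big(a_1\Theta_1^2h_2+\sum_{i\ge1}a_i\Theta_1\Theta_ih_{i+1}\big)$; and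 $L=S+P$. (H1): for some $\alpha\in[0,1]$ there exists $a\ge0$ with $0\le a_i\le a\,i^\alpha$ and $b_i\ge0$ for all $i$. (H2): $\inf_i a_i>0$ and $\inf_i b_i>0$. (H3): $\lim_{i\to\infty}Q_{i+1}/Q_i=1/z_s$. (H4): there is $l>0$ with $\lim_{i\to\infty}a_{i+1}/a_i=l$. (H5): there exist $\beta\in[0,1]$ and $b>0$ with $b_i\le b\,i^\beta$ for all $i\ge1$. *)

theory Defs
  imports "HOL-Analysis.Analysis"
begin

text \<open>Sequences are functions nat => real; only indices i >= 1 are meaningful
  (the value at index 0 is ignored everywhere).\<close>

definition Qc :: "(nat \<Rightarrow> real) \<Rightarrow> (nat \<Rightarrow> real) \<Rightarrow> nat \<Rightarrow> real" where
  "Qc a b i = (\<Prod>j\<in>{2..i}. a (j - 1) / b j)"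

definition zs :: "(nat \<Rightarrow> real) \<Rightarrow> (nat \<Rightarrow> real) \<Rightarrow> ereal" where
  "zs a b = conv_radius (\<lambda>i. if i = 0 then 0 else a i * Qc a b i)"

definition Theta :: "(nat \<Rightarrow> real) \<Rightarrow> (nat \<Rightarrow> real) \<Rightarrow> real \<Rightarrow> nat \<Rightarrow> real" where
  "Theta a b z i = Qc a b i * z ^ i"

definition sigma :: "(nat \<Rightarrow> real) \<Rightarrow> (nat \<Rightarrow> real) \<Rightarrow> real \<Rightarrow> nat \<Rightarrow> real" where
  "sigma a b z i = (if i = 1 then 3 * a 1 * z + (\<Sum>k. a (Suc k) * Theta a b z (Suc k))
                    else a i * z + b i)"

definition normZ :: "(nat \<Rightarrow> real) \<Rightarrow> (nat \<Rightarrow> real) \<Rightarrow> real \<Rightarrow> real \<Rightarrow> (nat \<Rightarrow> real) \<Rightarrow> real" where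
  "normZ a b z \<eta> h = (\<Sum>k. exp (\<eta> * real (Suc k)) * Theta a b z (Suc k) * \<bar>h (Suc k)\<bar>)"

definition normZD :: "(nat \<Rightarrow> real) \<Rightarrow> (nat \<Rightarrow> real) \<Rightarrow> real \<Rightarrow> real \<Rightarrow> (nat \<Rightarrow> real) \<Rightarrow> real" where
  "normZD a b z \<eta> h = (\<Sum>k. (1 + sigma a b z (Suc k)) * exp (\<eta> * real (Suc k))
                          * Theta a b z (Suc k) * \<bar>h (Suc k)\<bar>)"

definition compact_supp :: "(nat \<Rightarrow> real) \<Rightarrow> bool" where
  "compact_supp h \<longleftrightarrow> finite {i. h i \<noteq> 0}"

text \<open>The operators S and P, written out explicitly: S_j(h) (resp. P_j(h)) is the
  coefficient of phi_j in the defining duality identity, divided by Theta_j.\<close>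
definition Sop :: "(nat \<Rightarrow> real) \<Rightarrow> (nat \<Rightarrow> real) \<Rightarrow> real \<Rightarrow> (nat \<Rightarrow> real) \<Rightarrow> nat \<Rightarrow> real" where
  "Sop a b z h j = (if j = 0 then 0 else
     ((if j \<ge> 2 then a (j - 1) * Theta a b z 1 * Theta a b z (j - 1) * (h (j - 1) + h 1 - h j) else 0)
      - a j * Theta a b z 1 * Theta a b z j * (h j + h 1 - h (Suc j))
      - (if j = 1 then (\<Sum>k. a (Suc k) * Theta a b z 1 * Theta a b z (Suc k)
                              * (h (Suc k) + h 1 - h (Suc (Suc k)))) else 0))
     / Theta a b z j)"

definition Pop :: "(nat \<Rightarrow> real) \<Rightarrow> (nat \<Rightarrow> real) \<Rightarrow> real \<Rightarrow> (nat \<Rightarrow> real) \<Rightarrow> nat \<Rightarrow> real" where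
  "Pop a b z h j = (if j = 1 then
     - (a 1 * (Theta a b z 1)^2 * h 2
        + (\<Sum>k. a (Suc k) * Theta a b z 1 * Theta a b z (Suc k) * h (Suc (Suc k))))
       / Theta a b z 1 else 0)"

definition Lop :: "(nat \<Rightarrow> real) \<Rightarrow> (nat \<Rightarrow> real) \<Rightarrow> real \<Rightarrow> (nat \<Rightarrow> real) \<Rightarrow> nat \<Rightarrow> real" where
  "Lop a b z h j = Sop a b z h j + Pop a b z h j"

end

theory Submission
  imports Defs
begin

lemma Qc_Suc: "i \<ge> 1 \<Longrightarrow> Qc a b (Suc i) = Qc a b i * (a i / b (Suc i))"
  unfolding Qc_def by (simp add: prod.cl_ivl_Suc)

lemma Qc_1: "Qc a b 1 = 1" by (simp add: Qc_def)

lemma Qc_pos: "(\<And>i. i \<ge> 1 \<Longrightarrow> 0 < a i) \<Longrightarrow> (\<And>i. i \<ge> 1 \<Longrightarrow> 0 < b i) \<Longrightarrow> 0 < Qc a b i"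
  unfolding Qc_def by (rule prod_pos) auto

lemma abs_suminf_le:
  fixes f g :: "nat \<Rightarrow> real"
  assumes "summable g" "\<And>n. \<bar>f n\<bar> \<le> g n"
  shows "\<bar>suminf f\<bar> \<le> suminf g"
proof -
  have s: "summable (\<lambda>n. \<bar>f n\<bar>)" using assms summable_rabs_comparison_test by blast
  have "\<bar>suminf f\<bar> \<le> (\<Sum>n. \<bar>f n\<bar>)" by (rule summable_rabs[OF s])
  also have "\<dots> \<le> suminf g" by (rule suminf_le[OF assms(2) s assms(1)])
  finally show ?thesis .
qed

lemma le_mult_ge1: "0 \<le> (x::real) \<Longrightarrow> 1 \<le> c \<Longrightarrow> x \<le> c * x"
  using mult_right_mono[of 1 c x] by simp

lemma abs4: "\<bar>- A - B - (C + D)\<bar> \<le> \<bar>A\<bar> + \<bar>B\<bar> + \<bar>C\<bar> + \<bar>(D::real)\<bar>"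
  by linarith

lemma abs_summable_le:
  fixes f g :: "nat \<Rightarrow> real"
  assumes "summable g" "\<And>n. \<bar>f n\<bar> \<le> g n"
  shows "summable f"
  using assms summable_comparison_test' by (metis real_norm_def)

theorem mainTheorem17:
  fixes a b :: "nat \<Rightarrow> real" and z \<eta> :: real
  assumes H1: "\<exists>\<alpha>\<in>{0..1}. \<exists>A\<ge>0. \<forall>i\<ge>1. 0 \<le> a i \<and> a i \<le> A * real i powr \<alpha>"
      and H1b: "\<forall>i\<ge>1. 0 \<le> b i"
      and H2: "\<exists>c>0. \<forall>i\<ge>1. c \<le> a i \<and> c \<le> b i"
      and H3: "(\<lambda>i. ereal (Qc a b (Suc i) / Qc a b i)) \<longlonglongrightarrow> inverse (zs a b)"
      and H4: "\<exists>l>0. (\<lambda>i. a (Suc i) / a i) \<longlonglongrightarrow> l"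
      and H5: "\<exists>\<beta>\<in>{0..1}. \<exists>B>0. \<forall>i\<ge>1. b i \<le> B * real i powr \<beta>"
      and z: "0 < z" "ereal z < zs a b"
      and eta: "0 < \<eta>" "ereal (z * exp (2 * \<eta>)) < zs a b"
  shows "\<exists>K>0. \<forall>h. compact_supp h \<longrightarrow>
           summable (\<lambda>k. exp (\<eta> * real (Suc k)) * Theta a b z (Suc k) * \<bar>Lop a b z h (Suc k)\<bar>)
         \<and> normZ a b z \<eta> (Lop a b z h) \<le> K * normZD a b z \<eta> h"
proof -
  from H2 obtain c where c: "c > 0" "\<forall>i\<ge>1. c \<le> a i \<and> c \<le> b i" by auto
  have apos: "\<And>i. i \<ge> 1 \<Longrightarrow> 0 < a i" using c by force
  have bpos: "\<And>i. i \<ge> 1 \<Longrightarrow> 0 < b i" using c by force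
  define Th where "Th = Theta a b z"
  define w where "w = (\<lambda>i::nat. exp (\<eta> * real i))"
  have Thpos: "\<And>i. 0 < Th i" using Qc_pos[OF apos bpos] z(1) unfolding Th_def Theta_def by auto
  have Th1: "Th 1 = z" using Qc_1[of a b] by (simp add: Th_def Theta_def)
  have ThSuc: "\<And>i. i \<ge> 1 \<Longrightarrow> Th (Suc i) = Th i * a i * z / b (Suc i)"
    by (simp add: Th_def Theta_def Qc_Suc)
  have w1: "\<And>i. 1 \<le> w i" unfolding w_def using eta(1) by simp
  have wSuc: "\<And>i. w (Suc i) = exp \<eta> * w i" unfolding w_def
    by (simp add: distrib_left exp_add mult.commute)
  have wpow: "w n = exp \<eta> ^ n" for n unfolding w_def by (metis exp_of_nat_mult mult.commute)
  have e1: "1 \<le> exp \<eta>" using eta(1) by simp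
  define m where "m = (\<lambda>k. w (Suc k) * a (Suc k) * Th (Suc k))"
  have mnn: "0 \<le> m k" for k
  proof -
    have "0 \<le> w (Suc k)" using w1[of "Suc k"] by linarith
    moreover have "0 < a (Suc k)" by (rule apos) simp
    moreover have "0 < Th (Suc k)" by (rule Thpos)
    ultimately show ?thesis unfolding m_def by simp
  qed
  have msum: "summable m"
  proof -
    let ?c = "\<lambda>i. if i = 0 then 0 else a i * Qc a b i"
    have "z * exp \<eta> \<le> z * exp (2 * \<eta>)" using z(1) eta(1) by simp
    hence "ereal (z * exp \<eta>) \<le> ereal (z * exp (2 * \<eta>))" by simp
    hence "ereal (z * exp \<eta>) < conv_radius ?c" using eta(2)
      unfolding zs_def by (rule order_le_less_trans)
    hence "ereal (norm (z * exp \<eta>)) < conv_radius ?c" using z(1) by simp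
    then have "summable (\<lambda>n. norm (?c n * (z*exp \<eta>)^n))" by (rule abs_summable_in_conv_radius)
    hence "summable (\<lambda>k. norm (?c (Suc k) * (z*exp \<eta>)^(Suc k)))" by (subst summable_Suc_iff)
    moreover have "norm (?c (Suc k) * (z*exp \<eta>)^(Suc k)) = m k" for k
    proof -
      have eq: "(z*exp \<eta>)^(Suc k) = z^(Suc k) * w (Suc k)"
        using wpow[of "Suc k"] by (simp only: power_mult_distrib)
      have "?c (Suc k) * (z*exp \<eta>)^(Suc k) = m k"
        unfolding eq m_def Th_def Theta_def by (simp add: mult_ac)
      thus ?thesis using mnn[of k] by simp
    qed
    ultimately show ?thesis by simp
  qed
  define M where "M = suminf m"
  have M0: "0 \<le> M" unfolding M_def by (rule suminf_nonneg[OF msum mnn])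
  define K where "K = (1 + 5 * exp \<eta>) * (2 + M)"
  have Kpos: "K > 0" unfolding K_def using M0 by (simp add: add_pos_nonneg)
  show ?thesis
  proof (intro exI[of _ K] conjI allI impI Kpos)
    fix h assume hc: "compact_supp h"
    have fin: "finite {i. h i \<noteq> 0}" using hc unfolding compact_supp_def .
    have finS: "finite {k. h (Suc k) \<noteq> 0}"
      using finite_vimageI[OF fin, of Suc] by (simp add: vimage_def)
    define sg where "sg = sigma a b z"
    have aTh_nn: "0 \<le> a (Suc k) * Th (Suc k)" for k
      using apos[of "Suc k"] Thpos[of "Suc k"] by simp
    have sigsum: "summable (\<lambda>k. a (Suc k) * Theta a b z (Suc k))"
    proof (rule abs_summable_le[OF msum])
      fix k
      have "\<bar>a (Suc k) * Th (Suc k)\<bar> = a (Suc k) * Th (Suc k)" using aTh_nn[of k] by simp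
      also have "\<dots> \<le> w (Suc k) * (a (Suc k) * Th (Suc k))" by (rule le_mult_ge1[OF aTh_nn w1])
      finally show "\<bar>a (Suc k) * Theta a b z (Suc k)\<bar> \<le> m k" unfolding m_def Th_def by (simp add: mult_ac)
    qed
    have sig_ge_a: "a i * z \<le> sg i" if "i \<ge> 1" for i
    proof (cases "i = 1")
      case True
      have "0 \<le> (\<Sum>k. a (Suc k) * Theta a b z (Suc k))"
        by (rule suminf_nonneg[OF sigsum]) (use aTh_nn in \<open>simp add: Th_def\<close>)
      moreover have "0 \<le> a 1 * z" using apos[of 1] z(1) by simp
      ultimately show ?thesis using True unfolding sg_def sigma_def by (simp add: mult.commute)
    next
      case False
      then show ?thesis using H1b that unfolding sg_def sigma_def by simp
    qed
    have sig_ge_b: "b i \<le> sg i" if "i \<ge> 2" for i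
    proof -
      have "0 \<le> a i * z" using apos[of i] z(1) that by simp
      thus ?thesis using that unfolding sg_def sigma_def by simp
    qed
    have sg_nn: "0 \<le> sg (Suc k)" for k
      using sig_ge_a[of "Suc k"] apos[of "Suc k"] z(1) proof -
      have "0 \<le> a (Suc k) * z" using apos[of "Suc k"] z(1) by simp
      thus ?thesis using sig_ge_a[of "Suc k"] by simp
    qed
    define D where "D = (\<lambda>k. (1 + sg (Suc k)) * w (Suc k) * Th (Suc k) * \<bar>h (Suc k)\<bar>)"
    have Dnn: "0 \<le> D k" for k
      unfolding D_def using sg_nn[of k] w1[of "Suc k"] Thpos[of "Suc k"] by simp
    have Dsum: "summable D"
    proof -
      have "D sums (\<Sum>k\<in>{k. h (Suc k) \<noteq> 0}. D k)"
        by (rule sums_finite[OF finS]) (simp add: D_def)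
      thus ?thesis by (rule sums_summable)
    qed
    define N where "N = suminf D"
    have NZD: "normZD a b z \<eta> h = N"
      unfolding N_def D_def normZD_def sg_def w_def Th_def by simp
    have D0N: "D 0 \<le> N"
      using sum_le_suminf[OF Dsum, of "{0}"] Dnn unfolding N_def by simp
    have N0: "0 \<le> N" using Dnn[of 0] D0N by simp
    define F1 where "F1 = (\<lambda>k. w (Suc k) * a (Suc k) * z * Th (Suc k) * \<bar>h (Suc k)\<bar>)"
    define F3 where "F3 = (\<lambda>k. w (Suc k) * a (Suc k) * z * Th (Suc k) * \<bar>h (Suc (Suc k))\<bar>)"
    define F where "F = (\<lambda>k. w (Suc k) * a (Suc k) * z * Th (Suc k) * (\<bar>h (Suc k)\<bar> + \<bar>h 1\<bar> + \<bar>h (Suc (Suc k))\<bar>))"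
    have Fsplit: "F k = F1 k + z * \<bar>h 1\<bar> * m k + F3 k" for k
      unfolding F_def F1_def F3_def m_def by (simp add: algebra_simps)
    have base_nn: "0 \<le> w (Suc k) * a (Suc k) * z * Th (Suc k)" for k
      using w1[of "Suc k"] apos[of "Suc k"] z(1) Thpos[of "Suc k"] by simp
    have F1nn: "0 \<le> F1 k" for k unfolding F1_def using base_nn[of k] by simp
    have F3nn: "0 \<le> F3 k" for k unfolding F3_def using base_nn[of k] by simp
    have Fnn: "0 \<le> F k" for k unfolding F_def using base_nn[of k] by simp
    have F1D: "F1 k \<le> D k" for k
    proof -
      have "a (Suc k) * z \<le> 1 + sg (Suc k)" using sig_ge_a[of "Suc k"] by simp
      moreover have "0 \<le> w (Suc k) * Th (Suc k) * \<bar>h (Suc k)\<bar>"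
        using w1[of "Suc k"] Thpos[of "Suc k"] by simp
      ultimately have "(a (Suc k) * z) * (w (Suc k) * Th (Suc k) * \<bar>h (Suc k)\<bar>)
          \<le> (1 + sg (Suc k)) * (w (Suc k) * Th (Suc k) * \<bar>h (Suc k)\<bar>)"
        by (rule mult_right_mono)
      thus ?thesis unfolding F1_def D_def by (simp add: mult_ac)
    qed
    have F3D: "F3 k \<le> D (Suc k)" for k
    proof -
      define X where "X = w (Suc k) * a (Suc k) * z * Th (Suc k) * \<bar>h (Suc (Suc k))\<bar>"
      have X0: "0 \<le> X" unfolding X_def using base_nn[of k] by simp
      have bp: "0 < b (Suc (Suc k))" by (rule bpos) simp
      have "b (Suc (Suc k)) \<le> 1 + sg (Suc (Suc k))" using sig_ge_b[of "Suc (Suc k)"] by simp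
      hence c1: "1 \<le> (1 + sg (Suc (Suc k))) / b (Suc (Suc k))" using bp by simp
      have c2: "1 \<le> (1 + sg (Suc (Suc k))) / b (Suc (Suc k)) * exp \<eta>"
      proof -
        have "0 \<le> (1 + sg (Suc (Suc k))) / b (Suc (Suc k))" using c1 by linarith
        from mult_mono[OF c1 e1 this zero_le_one] show ?thesis by simp
      qed
      have thS: "Th (Suc (Suc k)) = Th (Suc k) * a (Suc k) * z / b (Suc (Suc k))" by (rule ThSuc) simp
      have "D (Suc k) = ((1 + sg (Suc (Suc k))) / b (Suc (Suc k)) * exp \<eta>) * X"
        unfolding D_def X_def thS wSuc[of "Suc k"] by (simp add: mult_ac)
      moreover have "F3 k = X" unfolding F3_def X_def by simp
      ultimately show ?thesis using le_mult_ge1[OF X0 c2] by simp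
    qed
    have F1sum: "summable F1" by (rule abs_summable_le[OF Dsum]) (use F1nn F1D in simp)
    have DSsum: "summable (\<lambda>k. D (Suc k))" using Dsum by (subst summable_Suc_iff)
    have F3sum: "summable F3" by (rule abs_summable_le[OF DSsum]) (use F3nn F3D in simp)
    have F1N: "suminf F1 \<le> N" unfolding N_def by (rule suminf_le[OF F1D F1sum Dsum])
    have F3N: "suminf F3 \<le> N"
    proof -
      have "suminf F3 \<le> (\<Sum>k. D (Suc k))" by (rule suminf_le[OF F3D F3sum DSsum])
      also have "\<dots> = N - D 0" unfolding N_def by (rule suminf_split_head[OF Dsum])
      finally show ?thesis using Dnn[of 0] by simp
    qed
    have hz: "z * \<bar>h 1\<bar> \<le> D 0"
    proof -
      have "1 \<le> (1 + sg 1) * w 1" using mult_mono[OF _ w1[of 1], of 1 "1 + sg 1"] sg_nn[of 0] by simp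
      moreover have "0 \<le> z * \<bar>h 1\<bar>" using z(1) by simp
      ultimately have "z * \<bar>h 1\<bar> \<le> ((1 + sg 1) * w 1) * (z * \<bar>h 1\<bar>)" using le_mult_ge1 by blast
      thus ?thesis unfolding D_def using Th1 by (simp add: mult_ac)
    qed
    have mhsum: "summable (\<lambda>k. z * \<bar>h 1\<bar> * m k)" using msum by (rule summable_mult)
    have Fsum: "summable F" unfolding Fsplit[abs_def]
      by (intro summable_add F1sum F3sum mhsum)
    define SF where "SF = suminf F"
    have SFeq: "SF = suminf F1 + z * \<bar>h 1\<bar> * M + suminf F3"
    proof -
      have "SF = (\<Sum>k. F1 k + z * \<bar>h 1\<bar> * m k) + suminf F3"
        unfolding SF_def Fsplit[abs_def] by (rule suminf_add[symmetric]) (intro summable_add F1sum mhsum, rule F3sum)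
      also have "(\<Sum>k. F1 k + z * \<bar>h 1\<bar> * m k) = suminf F1 + (\<Sum>k. z * \<bar>h 1\<bar> * m k)"
        by (rule suminf_add[symmetric, OF F1sum mhsum])
      also have "(\<Sum>k. z * \<bar>h 1\<bar> * m k) = z * \<bar>h 1\<bar> * M"
        unfolding M_def by (rule suminf_mult[OF msum])
      finally show ?thesis .
    qed
    have SFN: "SF \<le> (2 + M) * N"
    proof -
      have "z * \<bar>h 1\<bar> * M \<le> N * M" using mult_right_mono[OF order.trans[OF hz D0N] M0] .
      moreover have "(2 + M) * N = 2 * N + N * M" by (simp add: algebra_simps)
      ultimately show ?thesis using SFeq F1N F3N by linarith
    qed
    have F0SF: "F k \<le> SF" for k
      using sum_le_suminf[OF Fsum, of "{k}"] Fnn unfolding SF_def by simp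
    have SF0: "0 \<le> SF" using Fnn[of 0] F0SF[of 0] by simp
    define T where "T = (\<lambda>i. a i * z * Th i * (h i + h 1 - h (Suc i)))"
    have TF: "w i * \<bar>T i\<bar> \<le> w i * a i * z * Th i * (\<bar>h i\<bar> + \<bar>h 1\<bar> + \<bar>h (Suc i)\<bar>)" if "i \<ge> 1" for i
    proof -
      have nn: "0 \<le> w i * a i * z * Th i" using w1[of i] apos[OF that] z(1) Thpos[of i] by simp
      have "\<bar>h i + h 1 - h (Suc i)\<bar> \<le> \<bar>h i\<bar> + \<bar>h 1\<bar> + \<bar>h (Suc i)\<bar>" by linarith
      hence "(w i * a i * z * Th i) * \<bar>h i + h 1 - h (Suc i)\<bar> \<le> (w i * a i * z * Th i) * (\<bar>h i\<bar> + \<bar>h 1\<bar> + \<bar>h (Suc i)\<bar>)"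
        by (rule mult_left_mono[OF _ nn])
      moreover have "w i * \<bar>T i\<bar> = (w i * a i * z * Th i) * \<bar>h i + h 1 - h (Suc i)\<bar>"
        unfolding T_def using nn w1[of i] z(1) Thpos[of i] apos[OF that] by (simp add: abs_mult mult_ac)
      ultimately show ?thesis by linarith
    qed
    have TF': "w (Suc k) * \<bar>T (Suc k)\<bar> \<le> F k" for k using TF[of "Suc k"] unfolding F_def by simp
    have TF'': "\<bar>T (Suc k)\<bar> \<le> F k" for k
      using TF'[of k] le_mult_ge1[OF abs_ge_zero w1, of "T (Suc k)" "Suc k"] by simp
    define U where "U = (\<lambda>k. w (Suc k) * Th (Suc k) * \<bar>Lop a b z h (Suc k)\<bar>)"
    have Unn: "0 \<le> U k" for k unfolding U_def using w1[of "Suc k"] Thpos[of "Suc k"] by simp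
    have ThT1: "Theta a b z 1 = z" using Th1 unfolding Th_def .
    have ThT1': "Theta a b z (Suc 0) = z" using ThT1 by simp
    have LSS: "Th (Suc (Suc k)) * Lop a b z h (Suc (Suc k)) = T (Suc k) - T (Suc (Suc k))" for k
      using Thpos[of "Suc (Suc k)"]
      unfolding Lop_def Sop_def Pop_def T_def by (simp add: ThT1 ThT1' Th_def)
    define R where "R = (\<lambda>k. a (Suc k) * z * Th (Suc k) * h (Suc (Suc k)))"
    have L1: "Th 1 * Lop a b z h 1 = - T 1 - (\<Sum>k. T (Suc k)) - (a 1 * z^2 * h 2 + (\<Sum>k. R k))"
    proof -
      have zn: "z \<noteq> 0" using z(1) by simp
      have S1: "Sop a b z h 1 = (- T 1 - (\<Sum>k. T (Suc k))) / z"
        unfolding Sop_def T_def by (simp add: ThT1 ThT1' Th_def)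
      have P1: "Pop a b z h 1 = - (a 1 * z^2 * h 2 + (\<Sum>k. R k)) / z"
        unfolding Pop_def R_def by (simp add: ThT1 ThT1' Th_def)
      show ?thesis unfolding Lop_def S1 P1 Th1 using zn by (simp add: add_divide_distrib[symmetric])
    qed

    have Th1': "Th (Suc 0) = z" using Th1 by simp
    have RF: "\<bar>R k\<bar> \<le> F k" for k
    proof -
      have nn: "0 \<le> a (Suc k) * z * Th (Suc k) * \<bar>h (Suc (Suc k))\<bar>"
        using apos[of "Suc k"] z(1) Thpos[of "Suc k"] by simp
      have "\<bar>R k\<bar> = a (Suc k) * z * Th (Suc k) * \<bar>h (Suc (Suc k))\<bar>"
        unfolding R_def using apos[of "Suc k"] z(1) Thpos[of "Suc k"] by (simp add: abs_mult)
      also have "\<dots> \<le> w (Suc k) * (a (Suc k) * z * Th (Suc k) * \<bar>h (Suc (Suc k))\<bar>)"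
        by (rule le_mult_ge1[OF nn w1])
      also have "\<dots> = F3 k" unfolding F3_def by (simp add: mult_ac)
      also have "\<dots> \<le> F k" using Fsplit[of k] F1nn[of k] mnn[of k] z(1) by simp
      finally show ?thesis .
    qed
    have h2F: "a 1 * z^2 * \<bar>h 2\<bar> \<le> F 0"
    proof -
      have nn: "0 \<le> a 1 * z^2 * \<bar>h 2\<bar>" using apos[of 1] by simp
      have "a 1 * z^2 * \<bar>h 2\<bar> \<le> w 1 * (a 1 * z^2 * \<bar>h 2\<bar>)" by (rule le_mult_ge1[OF nn w1])
      also have "\<dots> = F3 0" unfolding F3_def using Th1' by (simp add: numeral_2_eq_2 power2_eq_square mult_ac)
      also have "\<dots> \<le> F 0" using Fsplit[of 0] F1nn[of 0] mnn[of 0] z(1) by simp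
      finally show ?thesis .
    qed
    have T1F: "\<bar>T 1\<bar> \<le> F 0" using TF''[of 0] by simp
    have U0: "U 0 \<le> 4 * exp \<eta> * SF"
    proof -
      have "U 0 = w 1 * \<bar>Th 1 * Lop a b z h 1\<bar>"
        unfolding U_def using Thpos[of 1] by (simp add: abs_mult)
      also have "\<bar>Th 1 * Lop a b z h 1\<bar> \<le> 4 * SF"
      proof -
        have "\<bar>Th 1 * Lop a b z h 1\<bar> \<le> \<bar>T 1\<bar> + \<bar>\<Sum>k. T (Suc k)\<bar> + \<bar>a 1 * z^2 * h 2\<bar> + \<bar>\<Sum>k. R k\<bar>"
          unfolding L1 by (rule abs4)
        moreover have "\<bar>\<Sum>k. T (Suc k)\<bar> \<le> SF" unfolding SF_def by (rule abs_suminf_le[OF Fsum TF''])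
        moreover have "\<bar>\<Sum>k. R k\<bar> \<le> SF" unfolding SF_def by (rule abs_suminf_le[OF Fsum RF])
        moreover have "\<bar>a 1 * z^2 * h 2\<bar> = a 1 * z^2 * \<bar>h 2\<bar>" using apos[of 1] by (simp add: abs_mult)
        ultimately show ?thesis using h2F T1F F0SF[of 0] by linarith
      qed
      hence "w 1 * \<bar>Th 1 * Lop a b z h 1\<bar> \<le> w 1 * (4 * SF)" using w1[of 1] by simp
      finally show ?thesis unfolding w_def by simp
    qed
    have USuc: "U (Suc k) \<le> exp \<eta> * F k + F (Suc k)" for k
    proof -
      have "U (Suc k) = w (Suc (Suc k)) * \<bar>T (Suc k) - T (Suc (Suc k))\<bar>"
        unfolding U_def LSS[symmetric] using Thpos[of "Suc (Suc k)"] by (simp add: abs_mult)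
      also have "\<dots> \<le> w (Suc (Suc k)) * \<bar>T (Suc k)\<bar> + w (Suc (Suc k)) * \<bar>T (Suc (Suc k))\<bar>"
        using w1[of "Suc (Suc k)"] abs_triangle_ineq4[of "T (Suc k)" "T (Suc (Suc k))"]
        by (simp add: distrib_left[symmetric] mult_left_mono)
      also have "w (Suc (Suc k)) * \<bar>T (Suc k)\<bar> = exp \<eta> * (w (Suc k) * \<bar>T (Suc k)\<bar>)"
        by (simp add: wSuc)
      also have "\<dots> \<le> exp \<eta> * F k" using TF'[of k] by simp
      finally show ?thesis using TF'[of "Suc k"] by simp
    qed
    define V where "V = (\<lambda>k. (if k = 0 then 0 else exp \<eta> * F (k - 1)) + F k + (if k = 0 then 4 * exp \<eta> * SF else 0))"
    have UV: "U k \<le> V k" for k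
    proof (cases k)
      case 0
      then show ?thesis using U0 Fnn[of 0] unfolding V_def by simp
    next
      case (Suc k')
      then show ?thesis using USuc[of k'] unfolding V_def by simp
    qed
    have G: "(\<lambda>k. if k = 0 then 0 else exp \<eta> * F (k - 1)) sums (exp \<eta> * SF)"
    proof -
      have "(\<lambda>n. exp \<eta> * F n) sums (exp \<eta> * SF)"
        unfolding SF_def by (rule sums_mult[OF summable_sums[OF Fsum]])
      hence "(\<lambda>n. (\<lambda>k. if k = 0 then 0 else exp \<eta> * F (k - 1)) (Suc n)) sums (exp \<eta> * SF)" by simp
      hence "(\<lambda>k. if k = 0 then 0 else exp \<eta> * F (k - 1)) sums (exp \<eta> * SF + 0)"
        by (subst (asm) sums_Suc_iff) simp
      thus ?thesis by simp
    qed
    have S3: "(\<lambda>k. if k = 0 then 4 * exp \<eta> * SF else 0) sums (4 * exp \<eta> * SF)"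
      using sums_single[of 0 "\<lambda>_. 4 * exp \<eta> * SF"] by simp
    have Vs: "V sums (exp \<eta> * SF + SF + 4 * exp \<eta> * SF)"
      unfolding V_def SF_def
      by (intro sums_add G[unfolded SF_def] S3[unfolded SF_def] summable_sums[OF Fsum])
    have Usum: "summable U" by (rule abs_summable_le[OF sums_summable[OF Vs]]) (use Unn UV in simp)
    have "suminf U \<le> suminf V" by (rule suminf_le[OF UV Usum sums_summable[OF Vs]])
    also have "suminf V = (1 + 5 * exp \<eta>) * SF" using sums_unique[OF Vs] by (simp add: algebra_simps)
    also have "\<dots> \<le> (1 + 5 * exp \<eta>) * ((2 + M) * N)"
      by (rule mult_left_mono[OF SFN]) simp
    finally have UK: "suminf U \<le> K * N" unfolding K_def by (simp add: mult_ac)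
    have Ueq: "(\<lambda>k. exp (\<eta> * real (Suc k)) * Theta a b z (Suc k) * \<bar>Lop a b z h (Suc k)\<bar>) = U"
      unfolding U_def w_def Th_def by simp
    show "summable (\<lambda>k. exp (\<eta> * real (Suc k)) * Theta a b z (Suc k) * \<bar>Lop a b z h (Suc k)\<bar>)"
      unfolding Ueq by (rule Usum)
    show "normZ a b z \<eta> (Lop a b z h) \<le> K * normZD a b z \<eta> h"
      unfolding normZ_def Ueq NZD by (rule UK)
  qed
qed

end
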